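(* Let $(X,\tau_X)$ be a locally compact space and $(Y,\mathcal{V})$ a Hausdorff uniform space, and equip $\mathcal{C}(X,Y)$, the set of continuous point-compact multifunctions from $X$ to $Y$, with the topology of uniform convergence $\tau_{uc}$. Let $\mathcal{F}\subset\mathcal{C}(X,Y)$ be pointwise relatively compact and equicontinuous. Then the following are equivalent: (C1) $\mathcal{F}$ is relatively $\tau_{uc}$-compact; (C2) $\mathcal{F}$ satisfies the finite extension property; (C3) $\mathcal{F}$ satisfies the compact extension property.
   Context: A multifunction $f:X\to Y$ assigns to each $x$ a nonempty $f(x)\subset Y$; it is point-compact if each $f(x)$ is compact. For $V\subset Y\times Y$, $V[a]=\{w:(a,w)\in V\}$, $V[A]=\bigcup_{a\in A}V[a]$, $f(A)=\bigcup_{a\in A}f(a)$; entourages are taken symmetric. $f$ is upper semi-continuous if for each $x$ and open $W\supset f(x)$ there is an open $U_x\ni x$ with $f(U_x)\subset W$; lower semi-continuous if for each $x$ and open $W$ with $f(x)\cap W\neq\emptyset$ there is an open $U_x\ni x$ with $f(u)\cap W\neq\emptyset$ for all $u\in U_x$; continuous if both. For $V\in\mathcal{V}$ and $D\subset X$ let $$V^{\dagger}_D=\{(f,g):\ \forall x\in D\ \forall y\in f(x)\ \forall z\in g(x):\ (\{y\}\times g(x))\cap V\neq\emptyset,\ (f(x)\times\{z\})\cap V\neq\emptyset\},$$ and $V^\dagger=V^\dagger_X$. The sets $V^\dagger$ form a base of the uniformity of uniform convergence, inducing $\tau_{uc}$. The uniformity of pointwise convergence $\mathcal{W}_{pc}$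 on $\mathcal{F}$ has subbase the sets $V^\dagger_{\{x\}}\cap(\mathcal{F}\times\mathcal{F})$ ($x\in X$, $V\in\mathcal{V}$); the uniformity of uniform convergence on compacta $\mathcal{W}_{ucc}$ on $\mathcal{F}$ has base the sets $V^\dagger_D\cap(\mathcal{F}\times\mathcal{F})$ ($D\subset X$ compact, $V\in\mathcal{V}$). $\mathcal{F}$ is pointwise relatively compact if $\bigcup\{f(x):f\in\mathcal{F}\}$ is relatively compact in $Y$ for each $x$. $\mathcal{F}$ is equicontinuous if for every $x\in X$ and $V\in\mathcal{V}$ there is an open $U_x\ni x$ such that for all $f\in\mathcal{F}$: $f(U_x)\subset V[f(x)]$, and $f(u)\cap V[y]\neq\emptyset$ for all $u\in U_x$, $y\in f(x)$. $\mathcal{F}$ has the finite (resp. compact) extension property if for every $V\in\mathcal{V}$ there is $W\in\mathcal{W}_{pc}$ (resp. $W\in\mathcal{W}_{ucc}$) with $W\subset V^\dagger\cap(\mathcal{F}\times\mathcal{F})$. Relatively $\tau_{uc}$-compact means the $\tau_{uc}$-closure of $\mathcal{F}$ in $\mathcal{C}(X,Y)$ is compact. *)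

theory Defs
  imports "HOL-Analysis.Analysis"
begin

text \<open>Multifunctions X \<rightarrow> Y are modelled as functions 'a \<Rightarrow> 'b set.
  X is the topological space of type 'a, Y the uniform space of type 'b.\<close>

definition entourages :: "('b::uniform_space \<times> 'b) set set" where
  "entourages = {V. eventually (\<lambda>p. p \<in> V) uniformity \<and> (\<forall>a b. (a, b) \<in> V \<longrightarrow> (b, a) \<in> V)}"

definition usc_mf :: "('a::topological_space \<Rightarrow> 'b::topological_space set) \<Rightarrow> bool" where
  "usc_mf f \<longleftrightarrow> (\<forall>x W. open W \<and> f x \<subseteq> W \<longrightarrow>
      (\<exists>U. open U \<and> x \<in> U \<and> \<Union>(f ` U) \<subseteq> W))"

definition lsc_mf :: "('a::topological_space \<Rightarrow> 'b::topological_space set) \<Rightarrow> bool" where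
  "lsc_mf f \<longleftrightarrow> (\<forall>x W. open W \<and> f x \<inter> W \<noteq> {} \<longrightarrow>
      (\<exists>U. open U \<and> x \<in> U \<and> (\<forall>u\<in>U. f u \<inter> W \<noteq> {})))"

definition CMF :: "('a::topological_space \<Rightarrow> 'b::topological_space set) set" where
  "CMF = {f. (\<forall>x. f x \<noteq> {} \<and> compact (f x)) \<and> usc_mf f \<and> lsc_mf f}"

definition dagger :: "('b \<times> 'b) set \<Rightarrow> 'a set \<Rightarrow> (('a \<Rightarrow> 'b set) \<times> ('a \<Rightarrow> 'b set)) set" where
  "dagger V D = {(f, g). \<forall>x\<in>D. \<forall>y\<in>f x. \<forall>z\<in>g x.
      ({y} \<times> g x) \<inter> V \<noteq> {} \<and> (f x \<times> {z}) \<inter> V \<noteq> {}}"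

text \<open>Topology of uniform convergence on C(X,Y): induced by the uniformity with base
  the sets dagger V UNIV, V an entourage (restricted to C(X,Y)).\<close>
definition uc_topology :: "('a::topological_space \<Rightarrow> 'b::uniform_space set) topology" where
  "uc_topology = topology (\<lambda>U. U \<subseteq> CMF \<and>
      (\<forall>f\<in>U. \<exists>V\<in>entourages. {g \<in> CMF. (f, g) \<in> dagger V UNIV} \<subseteq> U))"


lemma entourages_Int: "V \<in> entourages \<Longrightarrow> V' \<in> entourages \<Longrightarrow> V \<inter> V' \<in> entourages"
  unfolding entourages_def by (auto intro: eventually_conj)

lemma dagger_mono: "V \<subseteq> V' \<Longrightarrow> dagger V D \<subseteq> dagger V' D"
  unfolding dagger_def by blast

lemma istopology_uc:
  "istopology (\<lambda>U. U \<subseteq> (CMF :: ('a::topological_space \<Rightarrow> 'b::uniform_space set) set) \<and>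
      (\<forall>f\<in>U. \<exists>V\<in>entourages. {g \<in> CMF. (f, g) \<in> dagger V UNIV} \<subseteq> U))"
    (is "istopology ?L")
proof -
  have 1: "?L (S \<inter> T)" if S: "?L S" and T: "?L T" for S T
  proof -
    have "\<exists>W\<in>entourages. {g \<in> CMF. (f, g) \<in> dagger W UNIV} \<subseteq> S \<inter> T" if "f \<in> S \<inter> T" for f
    proof -
      obtain V V' where "V \<in> entourages" "V' \<in> entourages"
        "{g \<in> CMF. (f, g) \<in> dagger V UNIV} \<subseteq> S" "{g \<in> CMF. (f, g) \<in> dagger V' UNIV} \<subseteq> T"
        using S T \<open>f \<in> S \<inter> T\<close> by blast
      moreover have "dagger (V \<inter> V') UNIV \<subseteq> dagger V UNIV \<inter> dagger V' UNIV"
        using dagger_mono by blast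
      ultimately show ?thesis
        by (intro bexI[of _ "V \<inter> V'"]) (auto intro: entourages_Int)
    qed
    then show ?thesis using S by blast
  qed
  have 2: "?L (\<Union>K)" if K: "\<forall>U\<in>K. ?L U" for K
  proof -
    have "\<exists>V\<in>entourages. {g \<in> CMF. (f, g) \<in> dagger V UNIV} \<subseteq> \<Union>K" if "f \<in> \<Union>K" for f
    proof -
      obtain U where "U \<in> K" "f \<in> U" using \<open>f \<in> \<Union>K\<close> by blast
      with K obtain V where "V \<in> entourages" "{g \<in> CMF. (f, g) \<in> dagger V UNIV} \<subseteq> U" by blast
      then show ?thesis using \<open>U \<in> K\<close> by blast
    qed
    then show ?thesis using K by blast
  qed
  show ?thesis unfolding istopology_def using 1 2 by blast
qed

lemma openin_uc_topology:
  "openin uc_topology U \<longleftrightarrow> U \<subseteq> CMF \<and>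
      (\<forall>f\<in>U. \<exists>V\<in>entourages. {g \<in> CMF. (f, g) \<in> dagger V UNIV} \<subseteq> U)"
  unfolding uc_topology_def topology_inverse'[OF istopology_uc] by (rule refl)

definition pointwise_rel_compact :: "('a \<Rightarrow> 'b::topological_space set) set \<Rightarrow> bool" where
  "pointwise_rel_compact F \<longleftrightarrow> (\<forall>x. compact (closure (\<Union>f\<in>F. f x)))"

definition equicontinuous_mf :: "('a::topological_space \<Rightarrow> 'b::uniform_space set) set \<Rightarrow> bool" where
  "equicontinuous_mf F \<longleftrightarrow> (\<forall>x. \<forall>V\<in>entourages. \<exists>U. open U \<and> x \<in> U \<and>
      (\<forall>f\<in>F. \<Union>(f ` U) \<subseteq> V `` f x \<and> (\<forall>u\<in>U. \<forall>y\<in>f x. f u \<inter> V `` {y} \<noteq> {})))"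

text \<open>Membership in the uniformity of pointwise convergence on F, generated by the subbase
  dagger V {x} \<inter> (F \<times> F): W contains a finite intersection of subbase elements.\<close>
definition W_pc :: "('a \<Rightarrow> 'b::uniform_space set) set \<Rightarrow> (('a \<Rightarrow> 'b set) \<times> ('a \<Rightarrow> 'b set)) set \<Rightarrow> bool" where
  "W_pc F W \<longleftrightarrow> W \<subseteq> F \<times> F \<and> (\<exists>S. finite S \<and> (\<forall>(x, V)\<in>S. V \<in> entourages) \<and>
      (F \<times> F) \<inter> (\<Inter>(x, V)\<in>S. dagger V {x}) \<subseteq> W)"

text \<open>Membership in the uniformity of uniform convergence on compacta on F.\<close>
definition W_ucc :: "('a::topological_space \<Rightarrow> 'b::uniform_space set) set \<Rightarrow> (('a \<Rightarrow> 'b set) \<times> ('a \<Rightarrow> 'b set)) set \<Rightarrow> bool" where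
  "W_ucc F W \<longleftrightarrow> W \<subseteq> F \<times> F \<and> (\<exists>D V. compact D \<and> V \<in> entourages \<and>
      (F \<times> F) \<inter> dagger V D \<subseteq> W)"

definition finite_extension_property :: "('a \<Rightarrow> 'b::uniform_space set) set \<Rightarrow> bool" where
  "finite_extension_property F \<longleftrightarrow>
     (\<forall>V\<in>entourages. \<exists>W. W_pc F W \<and> W \<subseteq> dagger V UNIV \<inter> (F \<times> F))"

definition compact_extension_property :: "('a::topological_space \<Rightarrow> 'b::uniform_space set) set \<Rightarrow> bool" where
  "compact_extension_property F \<longleftrightarrow>
     (\<forall>V\<in>entourages. \<exists>W. W_ucc F W \<and> W \<subseteq> dagger V UNIV \<inter> (F \<times> F))"

definition rel_uc_compact :: "('a::topological_space \<Rightarrow> 'b::uniform_space set) set \<Rightarrow> bool" where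
  "rel_uc_compact F \<longleftrightarrow> compactin uc_topology (uc_topology closure_of F)"

end

theory Submission
  imports Defs
begin

lemma ent_ev: "V \<in> entourages \<Longrightarrow> eventually (\<lambda>p. p \<in> V) uniformity"
  by (simp add: entourages_def)

lemma ent_refl: "V \<in> entourages \<Longrightarrow> (y, y) \<in> V"
  using uniformity_refl[of "\<lambda>p. p \<in> V"] by (simp add: entourages_def)

lemma ent_sym: "V \<in> entourages \<Longrightarrow> (a, b) \<in> V \<Longrightarrow> (b, a) \<in> V"
  by (simp add: entourages_def)

lemma ent_UNIV: "UNIV \<in> entourages"
  by (simp add: entourages_def)

lemma ent_half:
  assumes "V \<in> entourages"
  shows "\<exists>W\<in>entourages. \<forall>a b c. (a, b) \<in> W \<longrightarrow> (b, c) \<in> W \<longrightarrow> (a, c) \<in> V"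
proof -
  obtain D where D: "eventually D uniformity" "\<And>x y z. D (x, y) \<Longrightarrow> D (y, z) \<Longrightarrow> (x, z) \<in> V"
    using uniformity_transE[OF ent_ev[OF assms]] by metis
  define W where "W = {p. D p \<and> D (snd p, fst p)}"
  have "eventually (\<lambda>p. p \<in> W) uniformity"
    unfolding W_def using eventually_conj[OF D(1) uniformity_sym[OF D(1)]]
    by (simp add: case_prod_beta)
  then have "W \<in> entourages" unfolding entourages_def W_def by auto
  moreover have "\<forall>a b c. (a, b) \<in> W \<longrightarrow> (b, c) \<in> W \<longrightarrow> (a, c) \<in> V"
    using D(2) unfolding W_def by auto
  ultimately show ?thesis by blast
qed

lemma ent_half_sub: "V \<in> entourages \<Longrightarrow> (\<forall>a b c. (a, b) \<in> W \<longrightarrow> (b, c) \<in> W \<longrightarrow> (a, c) \<in> V) \<Longrightarrow> W \<in> entourages \<Longrightarrow> W \<subseteq> V"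
  using ent_refl by fast

lemma ent_Int: "V \<in> entourages \<Longrightarrow> W \<in> entourages \<Longrightarrow> V \<inter> W \<in> entourages"
  by (rule entourages_Int)

lemma ent_Inter: "finite S \<Longrightarrow> S \<subseteq> entourages \<Longrightarrow> \<Inter>S \<in> entourages"
  by (induction S rule: finite_induct) (auto simp: ent_UNIV ent_Int)

lemma ent_nhd:
  assumes "V \<in> entourages"
  shows "\<exists>G. open G \<and> y \<in> G \<and> G \<subseteq> V `` {y}"
proof -
  have "eventually (\<lambda>z. z \<in> V `` {y}) (nhds y)"
    unfolding eventually_nhds_uniformity using ent_ev[OF assms]
    by (auto elim: eventually_mono)
  then show ?thesis unfolding eventually_nhds by auto
qed

lemma open_ent:
  fixes G :: "'b::uniform_space set"
  assumes "open G" "y \<in> G"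
  shows "\<exists>V\<in>entourages. V `` {y} \<subseteq> G"
proof -
  define E where "E = (\<lambda>(x', z). x' = y \<longrightarrow> (z::'b) \<in> G)"
  have E: "eventually E uniformity" using assms unfolding open_uniformity E_def by auto
  define W where "W = {p. E p \<and> E (snd p, fst p)}"
  have "eventually (\<lambda>p. p \<in> W) uniformity"
    unfolding W_def using eventually_conj[OF E uniformity_sym[OF E]]
    by (simp add: case_prod_beta)
  then have "W \<in> entourages" unfolding entourages_def W_def by auto
  moreover have "W `` {y} \<subseteq> G" unfolding W_def E_def by auto
  ultimately show ?thesis by blast
qed

lemma closure_ent:
  fixes A :: "'b::uniform_space set"
  shows "y \<in> closure A \<longleftrightarrow> (\<forall>V\<in>entourages. \<exists>z\<in>A. (y, z) \<in> V)"
proof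
  assume y: "y \<in> closure A"
  show "\<forall>V\<in>entourages. \<exists>z\<in>A. (y, z) \<in> V"
  proof
    fix V :: "('b \<times> 'b) set" assume "V \<in> entourages"
    then obtain G where G: "open G" "y \<in> G" "G \<subseteq> V `` {y}" using ent_nhd by blast
    then have "A \<inter> G \<noteq> {}" using y by (meson closure_iff_nhds_not_empty order_refl)
    then show "\<exists>z\<in>A. (y, z) \<in> V" using G by blast
  qed
next
  assume R: "\<forall>V\<in>entourages. \<exists>z\<in>A. (y, z) \<in> V"
  show "y \<in> closure A"
  proof (rule ccontr)
    assume "y \<notin> closure A"
    then obtain V where "V \<in> entourages" "V `` {y} \<subseteq> - closure A"
      using open_ent[of "- closure A" y] by auto
    then show False using R closure_subset by blast
  qed
qed

lemma compact_ent:
  fixes C :: "'b::uniform_space set"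
  assumes "compact C" "open G" "C \<subseteq> G"
  shows "\<exists>V\<in>entourages. V `` C \<subseteq> G"
proof -
  have "\<forall>y\<in>C. \<exists>V\<in>entourages. V `` {y} \<subseteq> G" using open_ent assms by blast
  then obtain Vf where Vf: "\<And>y. y \<in> C \<Longrightarrow> Vf y \<in> entourages \<and> Vf y `` {y} \<subseteq> G" by metis
  have "\<forall>y\<in>C. \<exists>W\<in>entourages. \<forall>a b c. (a, b) \<in> W \<longrightarrow> (b, c) \<in> W \<longrightarrow> (a, c) \<in> Vf y"
    using ent_half Vf by blast
  then obtain Wf where Wf: "\<And>y. y \<in> C \<Longrightarrow> Wf y \<in> entourages \<and> (\<forall>a b c. (a, b) \<in> Wf y \<longrightarrow> (b, c) \<in> Wf y \<longrightarrow> (a, c) \<in> Vf y)" by metis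
  have "\<forall>y\<in>C. \<exists>G'. open G' \<and> y \<in> G' \<and> G' \<subseteq> Wf y `` {y}" using ent_nhd Wf by blast
  then obtain Of where Of: "\<And>y. y \<in> C \<Longrightarrow> open (Of y) \<and> y \<in> Of y \<and> Of y \<subseteq> Wf y `` {y}" by metis
  obtain D where D: "D \<subseteq> C" "finite D" "C \<subseteq> (\<Union>y\<in>D. Of y)"
    using compactE_image[OF assms(1), of C Of] Of by blast
  define V where "V = \<Inter>(Wf ` D)"
  have "V \<in> entourages" unfolding V_def using D Wf by (intro ent_Inter) auto
  moreover have "V `` C \<subseteq> G"
  proof
    fix z assume "z \<in> V `` C"
    then obtain y where y: "y \<in> C" "(y, z) \<in> V" by blast
    then obtain d where d: "d \<in> D" "y \<in> Of d" using D by blast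
    then have "(d, y) \<in> Wf d" using Of D by blast
    moreover have "(y, z) \<in> Wf d" using y d unfolding V_def by blast
    ultimately have "(d, z) \<in> Vf d" using Wf d D by blast
    then show "z \<in> G" using Vf d D by blast
  qed
  ultimately show ?thesis by blast
qed



definition hc :: "('b \<times> 'b) set \<Rightarrow> 'b set \<Rightarrow> 'b set \<Rightarrow> bool" where
  "hc V A B \<longleftrightarrow> (\<forall>y\<in>A. \<exists>z\<in>B. (y, z) \<in> V) \<and> (\<forall>z\<in>B. \<exists>y\<in>A. (y, z) \<in> V)"

lemma dagger_iff:
  assumes "\<And>x. x \<in> D \<Longrightarrow> f x \<noteq> {} \<and> g x \<noteq> {}"
  shows "(f, g) \<in> dagger V D \<longleftrightarrow> (\<forall>x\<in>D. hc V (f x) (g x))"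
proof
  assume fg: "(f, g) \<in> dagger V D"
  show "\<forall>x\<in>D. hc V (f x) (g x)"
  proof
    fix x assume x: "x \<in> D"
    obtain y0 z0 where y0: "y0 \<in> f x" and z0: "z0 \<in> g x" using assms[OF x] by blast
    have *: "\<forall>y\<in>f x. \<forall>z\<in>g x. ({y} \<times> g x) \<inter> V \<noteq> {} \<and> (f x \<times> {z}) \<inter> V \<noteq> {}"
      using fg x unfolding dagger_def by blast
    have "\<forall>y\<in>f x. \<exists>z\<in>g x. (y, z) \<in> V"
    proof
      fix y assume "y \<in> f x"
      then have "({y} \<times> g x) \<inter> V \<noteq> {}" using * z0 by blast
      then show "\<exists>z\<in>g x. (y, z) \<in> V" by blast
    qed
    moreover have "\<forall>z\<in>g x. \<exists>y\<in>f x. (y, z) \<in> V"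
    proof
      fix z assume "z \<in> g x"
      then have "(f x \<times> {z}) \<inter> V \<noteq> {}" using * y0 by blast
      then show "\<exists>y\<in>f x. (y, z) \<in> V" by blast
    qed
    ultimately show "hc V (f x) (g x)" unfolding hc_def by blast
  qed
next
  assume "\<forall>x\<in>D. hc V (f x) (g x)"
  then show "(f, g) \<in> dagger V D"
    unfolding dagger_def hc_def by blast
qed

lemma CMF_ne: "f \<in> CMF \<Longrightarrow> f x \<noteq> {}"
  by (simp add: CMF_def)

lemma CMF_compact: "f \<in> CMF \<Longrightarrow> compact (f x)"
  by (simp add: CMF_def)

lemma dagger_CMF: "f \<in> CMF \<Longrightarrow> g \<in> CMF \<Longrightarrow> (f, g) \<in> dagger V D \<longleftrightarrow> (\<forall>x\<in>D. hc V (f x) (g x))"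
  by (rule dagger_iff) (auto simp: CMF_ne)

lemma hc_trans: "hc V A B \<Longrightarrow> hc W B C \<Longrightarrow> (\<forall>a b c. (a, b) \<in> V \<longrightarrow> (b, c) \<in> W \<longrightarrow> (a, c) \<in> U) \<Longrightarrow> hc U A C"
  unfolding hc_def by blast

lemma hc_sym: "V \<in> entourages \<Longrightarrow> hc V A B \<Longrightarrow> hc V B A"
  unfolding hc_def using ent_sym by blast

lemma hc_refl: "V \<in> entourages \<Longrightarrow> hc V A A"
  unfolding hc_def using ent_refl by blast

lemma hc_mono: "V \<subseteq> U \<Longrightarrow> hc V A B \<Longrightarrow> hc U A B"
  unfolding hc_def by blast

lemma topspace_uc: "topspace uc_topology = CMF"
proof -
  have "openin uc_topology CMF"
    unfolding openin_uc_topology using ent_UNIV by blast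
  moreover have "openin uc_topology U \<Longrightarrow> U \<subseteq> CMF" for U
    unfolding openin_uc_topology by blast
  ultimately show ?thesis
    by (metis openin_subset openin_topspace subset_antisym)
qed

lemma uc_ball_open:
  assumes "h \<in> CMF" "V \<in> entourages"
  shows "\<exists>G. openin uc_topology G \<and> h \<in> G \<and> G \<subseteq> {k\<in>CMF. \<forall>x. hc V (h x) (k x)}"
proof -
  define G where "G = {k\<in>CMF. \<exists>U\<in>entourages. \<forall>k'\<in>CMF. (\<forall>x. hc U (k x) (k' x)) \<longrightarrow> (\<forall>x. hc V (h x) (k' x))}"
  have sub: "G \<subseteq> CMF" unfolding G_def by blast
  have nb: "\<exists>U'\<in>entourages. {g \<in> CMF. (k, g) \<in> dagger U' UNIV} \<subseteq> G" if k: "k \<in> G" for k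
  proof -
    from k obtain U where U: "U \<in> entourages" "k \<in> CMF"
      "\<forall>k'\<in>CMF. (\<forall>x. hc U (k x) (k' x)) \<longrightarrow> (\<forall>x. hc V (h x) (k' x))"
      unfolding G_def by blast
    obtain U' where U': "U' \<in> entourages" "\<forall>a b c. (a, b) \<in> U' \<longrightarrow> (b, c) \<in> U' \<longrightarrow> (a, c) \<in> U"
      using ent_half[OF U(1)] by blast
    have "k' \<in> G" if k': "k' \<in> CMF" "(k, k') \<in> dagger U' UNIV" for k'
    proof -
      have hk': "\<forall>x. hc U' (k x) (k' x)" using dagger_CMF[OF U(2) k'(1)] k'(2) by blast
      have "\<forall>x. hc V (h x) (k'' x)" if "k'' \<in> CMF" "\<forall>x. hc U' (k' x) (k'' x)" for k''
      proof -
        have "hc U (k x) (k'' x)" for x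
          using hc_trans[of U' "k x" "k' x" U' "k'' x" U] hk' that(2) U'(2) by blast
        then show ?thesis using U(3) that(1) by blast
      qed
      then show ?thesis unfolding G_def using k'(1) U'(1) by blast
    qed
    then show ?thesis using U'(1) by blast
  qed
  have "openin uc_topology G"
    unfolding openin_uc_topology using sub nb by blast
  moreover have "h \<in> G" unfolding G_def using assms by blast
  moreover have "G \<subseteq> {k\<in>CMF. \<forall>x. hc V (h x) (k x)}"
  proof
    fix k assume "k \<in> G"
    then obtain U where U: "U \<in> entourages" "k \<in> CMF"
      "\<forall>k'\<in>CMF. (\<forall>x. hc U (k x) (k' x)) \<longrightarrow> (\<forall>x. hc V (h x) (k' x))"
      unfolding G_def by blast
    have "\<forall>x. hc U (k x) (k x)" using hc_refl[OF U(1)] by blast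
    then show "k \<in> {k\<in>CMF. \<forall>x. hc V (h x) (k x)}" using U by blast
  qed
  ultimately show ?thesis by blast
qed

lemma uc_closure:
  assumes "h \<in> uc_topology closure_of S" "V \<in> entourages"
  shows "h \<in> CMF \<and> (\<exists>f\<in>S. \<forall>x. hc V (h x) (f x))"
proof -
  have h: "h \<in> CMF" using assms(1) closure_of_subset_topspace[of uc_topology S] unfolding topspace_uc by blast
  obtain G where G: "openin uc_topology G" "h \<in> G" "G \<subseteq> {k\<in>CMF. \<forall>x. hc V (h x) (k x)}"
    using uc_ball_open[OF h assms(2)] by blast
  have "\<forall>T. h \<in> T \<and> openin uc_topology T \<longrightarrow> (\<exists>y. y \<in> S \<and> y \<in> T)"
    using assms(1) unfolding in_closure_of by (elim conjE)
  then have "\<exists>y. y \<in> S \<and> y \<in> G" using G(1,2) by blast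
  then obtain f where "f \<in> S" "f \<in> G" by blast
  then show ?thesis using h G(3) by blast
qed

lemma uc_open_ball:
  assumes "openin uc_topology G" "g \<in> G"
  shows "\<exists>V\<in>entourages. \<forall>k\<in>CMF. (\<forall>x. hc V (g x) (k x)) \<longrightarrow> k \<in> G"
proof -
  have o: "G \<subseteq> CMF \<and> (\<forall>f\<in>G. \<exists>V\<in>entourages. {g \<in> CMF. (f, g) \<in> dagger V UNIV} \<subseteq> G)"
    using assms(1) openin_uc_topology[of G] by blast
  then have g: "g \<in> CMF" using assms(2) by blast
  obtain V where V: "V \<in> entourages" "{k \<in> CMF. (g, k) \<in> dagger V UNIV} \<subseteq> G"
    using o assms(2) by blast
  have "k \<in> G" if "k \<in> CMF" "\<forall>x. hc V (g x) (k x)" for k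
    using V(2) dagger_CMF[OF g that(1)] that by blast
  then show ?thesis using V(1) by blast
qed



lemma ent_chain3:
  assumes "V \<in> entourages"
  shows "\<exists>W\<in>entourages. \<forall>a b c d. (a, b) \<in> W \<longrightarrow> (b, c) \<in> W \<longrightarrow> (c, d) \<in> W \<longrightarrow> (a, d) \<in> V"
proof -
  obtain W1 where W1: "W1 \<in> entourages" "\<forall>a b c. (a, b) \<in> W1 \<longrightarrow> (b, c) \<in> W1 \<longrightarrow> (a, c) \<in> V"
    using ent_half[OF assms] by blast
  obtain W where W: "W \<in> entourages" "\<forall>a b c. (a, b) \<in> W \<longrightarrow> (b, c) \<in> W \<longrightarrow> (a, c) \<in> W1"
    using ent_half[OF W1(1)] by blast
  have "W \<subseteq> W1" using ent_half_sub[OF W1(1) W(2) W(1)] .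
  have "\<forall>a b c d. (a, b) \<in> W \<longrightarrow> (b, c) \<in> W \<longrightarrow> (c, d) \<in> W \<longrightarrow> (a, d) \<in> V"
  proof (intro allI impI)
    fix a b c d assume "(a, b) \<in> W" "(b, c) \<in> W" "(c, d) \<in> W"
    then have "(a, c) \<in> W1" "(c, d) \<in> W1" using W(2) \<open>W \<subseteq> W1\<close> by blast+
    then show "(a, d) \<in> V" using W1(2) by blast
  qed
  then show ?thesis using W(1) by blast
qed

lemma ent_chain3_sub:
  assumes "W \<in> entourages" "\<forall>a b c d. (a, b) \<in> W \<longrightarrow> (b, c) \<in> W \<longrightarrow> (c, d) \<in> W \<longrightarrow> (a, d) \<in> V"
  shows "W \<subseteq> V"
proof
  fix p assume "p \<in> W"
  then obtain a b where "p = (a, b)" "(a, b) \<in> W" by (cases p) auto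
  moreover have "(b, b) \<in> W" using ent_refl[OF assms(1)] .
  ultimately show "p \<in> V" using assms(2) by blast
qed

lemma ent_chain5:
  assumes "V \<in> entourages"
  shows "\<exists>W\<in>entourages. \<forall>a b c d e f. (a, b) \<in> W \<longrightarrow> (b, c) \<in> W \<longrightarrow> (c, d) \<in> W
     \<longrightarrow> (d, e) \<in> W \<longrightarrow> (e, f) \<in> W \<longrightarrow> (a, f) \<in> V"
proof -
  obtain W1 where W1: "W1 \<in> entourages" "\<forall>a b c d. (a, b) \<in> W1 \<longrightarrow> (b, c) \<in> W1 \<longrightarrow> (c, d) \<in> W1 \<longrightarrow> (a, d) \<in> V"
    using ent_chain3[OF assms] by blast
  obtain W where W: "W \<in> entourages" "\<forall>a b c d. (a, b) \<in> W \<longrightarrow> (b, c) \<in> W \<longrightarrow> (c, d) \<in> W \<longrightarrow> (a, d) \<in> W1"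
    using ent_chain3[OF W1(1)] by blast
  have "W \<subseteq> W1" using ent_chain3_sub[OF W] .
  have "\<forall>a b c d e f. (a, b) \<in> W \<longrightarrow> (b, c) \<in> W \<longrightarrow> (c, d) \<in> W
     \<longrightarrow> (d, e) \<in> W \<longrightarrow> (e, f) \<in> W \<longrightarrow> (a, f) \<in> V"
  proof (intro allI impI)
    fix a b c d e f assume "(a, b) \<in> W" "(b, c) \<in> W" "(c, d) \<in> W" "(d, e) \<in> W" "(e, f) \<in> W"
    then have "(a, d) \<in> W1" "(d, e) \<in> W1" "(e, f) \<in> W1" using W(2) \<open>W \<subseteq> W1\<close> by blast+
    then show "(a, f) \<in> V" using W1(2) by blast
  qed
  then show ?thesis using W(1) by blast
qed

lemma fep_D:
  assumes "finite_extension_property F" "F \<subseteq> CMF" "V \<in> entourages"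
  shows "\<exists>P E. finite P \<and> E \<in> entourages \<and>
     (\<forall>f\<in>F. \<forall>h\<in>F. (\<forall>x\<in>P. hc E (f x) (h x)) \<longrightarrow> (\<forall>x. hc V (f x) (h x)))"
proof -
  obtain W where W: "W_pc F W" "W \<subseteq> dagger V UNIV \<inter> (F \<times> F)"
    using assms(1,3) unfolding finite_extension_property_def by blast
  obtain S where S: "finite S" "\<forall>(x, V)\<in>S. V \<in> entourages"
      "(F \<times> F) \<inter> (\<Inter>(x, V)\<in>S. dagger V {x}) \<subseteq> W"
    using W(1) unfolding W_pc_def by blast
  define E where "E = \<Inter>(snd ` S)"
  have E: "E \<in> entourages" unfolding E_def using S(1,2) by (intro ent_Inter) auto
  have "\<forall>x. hc V (f x) (h x)" if fh: "f \<in> F" "h \<in> F" "\<forall>x\<in>fst ` S. hc E (f x) (h x)" for f h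
  proof -
    have "(f, h) \<in> dagger V' {x}" if xV: "(x, V') \<in> S" for x V'
    proof -
      have "E \<subseteq> V'" unfolding E_def using xV by force
      moreover have "hc E (f x) (h x)" using fh(3) xV by force
      ultimately have "hc V' (f x) (h x)" using hc_mono by blast
      then show ?thesis using dagger_CMF[of f h V' "{x}"] fh(1,2) assms(2) by blast
    qed
    then have "(f, h) \<in> (\<Inter>(x, V)\<in>S. dagger V {x})" by blast
    then have "(f, h) \<in> dagger V UNIV" using S(3) W(2) fh(1,2) by blast
    then show ?thesis using dagger_CMF[of f h V UNIV] fh(1,2) assms(2) by blast
  qed
  then show ?thesis using E S(1) by blast
qed

lemma fep_I:
  assumes "F \<subseteq> CMF"
    and R: "\<And>V. V \<in> entourages \<Longrightarrow> \<exists>P E. finite P \<and> E \<in> entourages \<and>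
     (\<forall>f\<in>F. \<forall>h\<in>F. (\<forall>x\<in>P. hc E (f x) (h x)) \<longrightarrow> (\<forall>x. hc V (f x) (h x)))"
  shows "finite_extension_property F"
  unfolding finite_extension_property_def
proof
  fix V :: "('b \<times> 'b) set" assume V: "V \<in> entourages"
  obtain P E where PE: "finite P" "E \<in> entourages"
     "\<forall>f\<in>F. \<forall>h\<in>F. (\<forall>x\<in>P. hc E (f x) (h x)) \<longrightarrow> (\<forall>x. hc V (f x) (h x))"
    using R[OF V] by blast
  define S where "S = (\<lambda>x. (x, E)) ` P"
  define W where "W = (F \<times> F) \<inter> (\<Inter>(x, V)\<in>S. dagger V {x})"
  have "W_pc F W" unfolding W_pc_def W_def
    using PE(1,2) by (intro conjI exI[of _ S]) (auto simp: S_def)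
  moreover have "W \<subseteq> dagger V UNIV \<inter> (F \<times> F)"
  proof
    fix p assume p: "p \<in> W"
    then obtain f h where fh: "p = (f, h)" "f \<in> F" "h \<in> F" unfolding W_def by blast
    have "\<forall>x\<in>P. hc E (f x) (h x)"
    proof
      fix x assume "x \<in> P"
      then have "(f, h) \<in> dagger E {x}" using p fh(1) unfolding W_def S_def by blast
      then show "hc E (f x) (h x)" using dagger_CMF[of f h E "{x}"] fh assms(1) by blast
    qed
    then have "\<forall>x. hc V (f x) (h x)" using PE(3) fh by blast
    then show "p \<in> dagger V UNIV \<inter> (F \<times> F)" using dagger_CMF[of f h V UNIV] fh assms(1) by blast
  qed
  ultimately show "\<exists>W. W_pc F W \<and> W \<subseteq> dagger V UNIV \<inter> (F \<times> F)" by blast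
qed

lemma cep_D:
  assumes "compact_extension_property F" "F \<subseteq> CMF" "V \<in> entourages"
  shows "\<exists>D E. compact D \<and> E \<in> entourages \<and>
     (\<forall>f\<in>F. \<forall>h\<in>F. (\<forall>x\<in>D. hc E (f x) (h x)) \<longrightarrow> (\<forall>x. hc V (f x) (h x)))"
proof -
  obtain W where W: "W_ucc F W" "W \<subseteq> dagger V UNIV \<inter> (F \<times> F)"
    using assms(1,3) unfolding compact_extension_property_def by blast
  obtain D E where S: "compact D" "E \<in> entourages" "(F \<times> F) \<inter> dagger E D \<subseteq> W"
    using W(1) unfolding W_ucc_def by blast
  have "\<forall>x. hc V (f x) (h x)" if fh: "f \<in> F" "h \<in> F" "\<forall>x\<in>D. hc E (f x) (h x)" for f h
  proof -
    have "(f, h) \<in> dagger E D" using dagger_CMF[of f h E D] fh assms(2) by blast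
    then have "(f, h) \<in> dagger V UNIV" using S(3) W(2) fh(1,2) by blast
    then show ?thesis using dagger_CMF[of f h V UNIV] fh(1,2) assms(2) by blast
  qed
  then show ?thesis using S(1,2) by blast
qed

lemma cep_I:
  assumes "F \<subseteq> CMF"
    and R: "\<And>V. V \<in> entourages \<Longrightarrow> \<exists>D E. compact D \<and> E \<in> entourages \<and>
     (\<forall>f\<in>F. \<forall>h\<in>F. (\<forall>x\<in>D. hc E (f x) (h x)) \<longrightarrow> (\<forall>x. hc V (f x) (h x)))"
  shows "compact_extension_property F"
  unfolding compact_extension_property_def
proof
  fix V :: "('b \<times> 'b) set" assume V: "V \<in> entourages"
  obtain D E where PE: "compact D" "E \<in> entourages"
     "\<forall>f\<in>F. \<forall>h\<in>F. (\<forall>x\<in>D. hc E (f x) (h x)) \<longrightarrow> (\<forall>x. hc V (f x) (h x))"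
    using R[OF V] by blast
  define W where "W = (F \<times> F) \<inter> dagger E D"
  have "W_ucc F W" unfolding W_ucc_def W_def using PE(1,2) by blast
  moreover have "W \<subseteq> dagger V UNIV \<inter> (F \<times> F)"
  proof
    fix p assume p: "p \<in> W"
    then obtain f h where fh: "p = (f, h)" "f \<in> F" "h \<in> F" unfolding W_def by blast
    have "\<forall>x\<in>D. hc E (f x) (h x)"
      using p fh dagger_CMF[of f h E D] assms(1) unfolding W_def by blast
    then have "\<forall>x. hc V (f x) (h x)" using PE(3) fh by blast
    then show "p \<in> dagger V UNIV \<inter> (F \<times> F)" using dagger_CMF[of f h V UNIV] fh assms(1) by blast
  qed
  ultimately show "\<exists>W. W_ucc F W \<and> W \<subseteq> dagger V UNIV \<inter> (F \<times> F)" by blast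
qed

lemma fep_imp_cep:
  assumes "finite_extension_property F" "F \<subseteq> CMF"
  shows "compact_extension_property F"
proof (rule cep_I[OF assms(2)])
  fix V :: "('b \<times> 'b) set" assume "V \<in> entourages"
  then obtain P E where PE: "finite P" "E \<in> entourages"
     "\<forall>f\<in>F. \<forall>h\<in>F. (\<forall>x\<in>P. hc E (f x) (h x)) \<longrightarrow> (\<forall>x. hc V (f x) (h x))"
    using fep_D[OF assms] by blast
  show "\<exists>D E. compact D \<and> E \<in> entourages \<and>
     (\<forall>f\<in>F. \<forall>h\<in>F. (\<forall>x\<in>D. hc E (f x) (h x)) \<longrightarrow> (\<forall>x. hc V (f x) (h x)))"
    by (intro exI[of _ P] exI[of _ E] conjI finite_imp_compact PE)
qed



lemma cep_imp_fep:
  assumes "compact_extension_property F" "F \<subseteq> CMF" "equicontinuous_mf F"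
  shows "finite_extension_property F"
proof (rule fep_I[OF assms(2)])
  fix V :: "('b \<times> 'b) set" assume V: "V \<in> entourages"
  obtain D E where DE: "compact D" "E \<in> entourages"
     "\<forall>f\<in>F. \<forall>h\<in>F. (\<forall>x\<in>D. hc E (f x) (h x)) \<longrightarrow> (\<forall>x. hc V (f x) (h x))"
    using cep_D[OF assms(1,2) V] by blast
  obtain W where W: "W \<in> entourages" "\<forall>a b c d. (a, b) \<in> W \<longrightarrow> (b, c) \<in> W \<longrightarrow> (c, d) \<in> W \<longrightarrow> (a, d) \<in> E"
    using ent_chain3[OF DE(2)] by blast
  have "\<forall>x. \<exists>U. open U \<and> x \<in> U \<and> (\<forall>f\<in>F. \<Union>(f ` U) \<subseteq> W `` f x \<and> (\<forall>u\<in>U. \<forall>y\<in>f x. f u \<inter> W `` {y} \<noteq> {}))"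
    using assms(3) W(1) unfolding equicontinuous_mf_def by blast
  then obtain Uf where Uf: "\<And>x. open (Uf x) \<and> x \<in> Uf x \<and> (\<forall>f\<in>F. \<Union>(f ` Uf x) \<subseteq> W `` f x \<and> (\<forall>u\<in>Uf x. \<forall>y\<in>f x. f u \<inter> W `` {y} \<noteq> {}))"
    by metis
  obtain P where P: "P \<subseteq> D" "finite P" "D \<subseteq> (\<Union>p\<in>P. Uf p)"
    using compactE_image[OF DE(1), of D Uf] Uf by blast
  have key: "\<forall>x\<in>D. hc E (f x) (h x)" if fh: "f \<in> F" "h \<in> F" "\<forall>p\<in>P. hc W (f p) (h p)" for f h
  proof
    fix x assume "x \<in> D"
    then obtain p where p: "p \<in> P" "x \<in> Uf p" using P(3) by blast
    have Ef: "\<Union>(f ` Uf p) \<subseteq> W `` f p" "\<forall>u\<in>Uf p. \<forall>y\<in>f p. f u \<inter> W `` {y} \<noteq> {}"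
      using Uf fh(1) by blast+
    have Eh: "\<Union>(h ` Uf p) \<subseteq> W `` h p" "\<forall>u\<in>Uf p. \<forall>y\<in>h p. h u \<inter> W `` {y} \<noteq> {}"
      using Uf fh(2) by blast+
    have hcp: "hc W (f p) (h p)" using fh(3) p(1) by blast
    have 1: "\<exists>c\<in>h x. (y, c) \<in> E" if y: "y \<in> f x" for y
    proof -
      have "y \<in> W `` f p" using Ef(1) p(2) y by blast
      then obtain a where a: "a \<in> f p" "(a, y) \<in> W" by blast
      then obtain b where b: "b \<in> h p" "(a, b) \<in> W" using hcp unfolding hc_def by blast
      have "h x \<inter> W `` {b} \<noteq> {}" using Eh(2) p(2) b(1) by blast
      then obtain c where c: "c \<in> h x" "(b, c) \<in> W" by blast
      have "(y, a) \<in> W" using ent_sym[OF W(1) a(2)] .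
      then have "(y, c) \<in> E" using W(2) b(2) c(2) by blast
      then show ?thesis using c(1) by blast
    qed
    have 2: "\<exists>y\<in>f x. (y, c) \<in> E" if c: "c \<in> h x" for c
    proof -
      have "c \<in> W `` h p" using Eh(1) p(2) c by blast
      then obtain b where b: "b \<in> h p" "(b, c) \<in> W" by blast
      then obtain a where a: "a \<in> f p" "(a, b) \<in> W" using hcp unfolding hc_def by blast
      have "f x \<inter> W `` {a} \<noteq> {}" using Ef(2) p(2) a(1) by blast
      then obtain y where y: "y \<in> f x" "(a, y) \<in> W" by blast
      have "(y, a) \<in> W" using ent_sym[OF W(1) y(2)] .
      then have "(y, c) \<in> E" using W(2) a(2) b(2) by blast
      then show ?thesis using y(1) by blast
    qed
    show "hc E (f x) (h x)" unfolding hc_def using 1 2 by blast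
  qed
  have "\<forall>f\<in>F. \<forall>h\<in>F. (\<forall>x\<in>P. hc W (f x) (h x)) \<longrightarrow> (\<forall>x. hc V (f x) (h x))"
    using key DE(3) by blast
  then show "\<exists>P E. finite P \<and> E \<in> entourages \<and>
     (\<forall>f\<in>F. \<forall>h\<in>F. (\<forall>x\<in>P. hc E (f x) (h x)) \<longrightarrow> (\<forall>x. hc V (f x) (h x)))"
    using P(2) W(1) by blast
qed



lemma uc_K_CMF: "uc_topology closure_of F \<subseteq> CMF"
  using closure_of_subset_topspace[of uc_topology F] unfolding topspace_uc .

lemma uc_F_K: "F \<subseteq> CMF \<Longrightarrow> F \<subseteq> uc_topology closure_of F"
  by (rule closure_of_subset) (simp add: topspace_uc)

lemma rc_imp_fep:
  fixes F :: "('a::topological_space \<Rightarrow> 'b::uniform_space set) set"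
  assumes "rel_uc_compact F" "F \<subseteq> CMF"
  shows "finite_extension_property F"
proof (rule fep_I[OF assms(2)])
  fix V :: "('b \<times> 'b) set" assume V: "V \<in> entourages"
  obtain W where W: "W \<in> entourages" "\<forall>a b c d e f. (a, b) \<in> W \<longrightarrow> (b, c) \<in> W \<longrightarrow> (c, d) \<in> W
     \<longrightarrow> (d, e) \<in> W \<longrightarrow> (e, f) \<in> W \<longrightarrow> (a, f) \<in> V"
    using ent_chain5[OF V] by blast
  define W3 where "W3 = {(a, d). \<exists>b c. (a, b) \<in> W \<and> (b, c) \<in> W \<and> (c, d) \<in> W}"
  define R2 where "R2 = {(a, c). \<exists>b. (a, b) \<in> W \<and> (b, c) \<in> W}"
  define R4 where "R4 = {(a, e). \<exists>b. (a, b) \<in> W \<and> (b, e) \<in> W3}"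
  define K where "K = uc_topology closure_of F"
  have cK: "compactin uc_topology K" using assms(1) unfolding rel_uc_compact_def K_def .
  have KC: "K \<subseteq> CMF" unfolding K_def by (rule uc_K_CMF)
  have FK: "F \<subseteq> K" unfolding K_def using uc_F_K[OF assms(2)] .
  have "\<forall>g\<in>K. \<exists>G. openin uc_topology G \<and> g \<in> G \<and> G \<subseteq> {k\<in>CMF. \<forall>x. hc W (g x) (k x)}"
    using uc_ball_open KC W(1) by blast
  then obtain Ob where Ob: "\<And>g. g \<in> K \<Longrightarrow> openin uc_topology (Ob g) \<and> g \<in> Ob g \<and> Ob g \<subseteq> {k\<in>CMF. \<forall>x. hc W (g x) (k x)}"
    by metis
  have "(\<forall>U\<in>Ob ` K. openin uc_topology U) \<and> K \<subseteq> \<Union>(Ob ` K)" using Ob by blast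
  then obtain \<F> where \<F>: "finite \<F>" "\<F> \<subseteq> Ob ` K" "K \<subseteq> \<Union>\<F>"
    using cK unfolding compactin_def by meson
  obtain G where G: "G \<subseteq> K" "finite G" "\<F> = Ob ` G"
    using finite_subset_image[OF \<F>(1,2)] by blast
  define pt :: "('a \<Rightarrow> 'b set) \<times> ('a \<Rightarrow> 'b set) \<Rightarrow> 'a" where "pt = (\<lambda>(g, g'). SOME x. \<not> hc W3 (g x) (g' x))"
  define P where "P = pt ` (G \<times> G)"
  have key: "\<forall>x. hc V (f x) (h x)" if fh: "f \<in> F" "h \<in> F" "\<forall>x\<in>P. hc W (f x) (h x)" for f h
  proof -
    obtain g where g: "g \<in> G" "f \<in> Ob g" using \<F>(3) G(3) FK fh(1) by blast
    obtain g' where g': "g' \<in> G" "h \<in> Ob g'" using \<F>(3) G(3) FK fh(2) by blast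
    have gf: "\<forall>x. hc W (g x) (f x)" using Ob g G(1) by blast
    have g'h: "\<forall>x. hc W (g' x) (h x)" using Ob g' G(1) by blast
    show ?thesis
    proof (cases "\<forall>x. hc W3 (g x) (g' x)")
      case True
      show ?thesis
      proof
        fix x
        have a: "hc W (f x) (g x)" using hc_sym[OF W(1)] gf by blast
        have b: "hc R4 (f x) (g' x)"
          using hc_trans[OF a, of W3 "g' x" R4] True unfolding R4_def by blast
        have c: "\<forall>a b c. (a, b) \<in> R4 \<longrightarrow> (b, c) \<in> W \<longrightarrow> (a, c) \<in> V"
          unfolding R4_def W3_def using W(2) by blast
        show "hc V (f x) (h x)" using hc_trans[OF b _ c] g'h by blast
      qed
    next
      case False
      then have "\<exists>x. \<not> hc W3 (g x) (g' x)" by blast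
      then have n: "\<not> hc W3 (g (pt (g, g'))) (g' (pt (g, g')))"
        unfolding pt_def split by (rule someI_ex)
      define x0 where "x0 = pt (g, g')"
      have "x0 \<in> P" unfolding P_def x0_def using g(1) g'(1) by blast
      then have fh0: "hc W (f x0) (h x0)" using fh(3) by blast
      have hg': "hc W (h x0) (g' x0)" using hc_sym[OF W(1)] g'h by blast
      have "hc R2 (g x0) (h x0)"
        using hc_trans[OF gf[rule_format, of x0] fh0, of R2] unfolding R2_def by blast
      then have "hc W3 (g x0) (g' x0)"
        using hc_trans[OF _ hg', of R2 "g x0" W3] unfolding R2_def W3_def by blast
      then show ?thesis using n unfolding x0_def by blast
    qed
  qed
  have "finite P" unfolding P_def using G(2) by blast
  then show "\<exists>P E. finite P \<and> E \<in> entourages \<and>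
     (\<forall>f\<in>F. \<forall>h\<in>F. (\<forall>x\<in>P. hc E (f x) (h x)) \<longrightarrow> (\<forall>x. hc V (f x) (h x)))"
    using key W(1) by blast
qed



definition ultra :: "'x set set \<Rightarrow> 'x set \<Rightarrow> bool" where
  "ultra M K \<longleftrightarrow> M \<subseteq> Pow K \<and> K \<in> M \<and> {} \<notin> M \<and> (\<forall>A\<in>M. \<forall>B\<in>M. A \<inter> B \<in> M)
     \<and> (\<forall>A\<in>M. \<forall>B. A \<subseteq> B \<and> B \<subseteq> K \<longrightarrow> B \<in> M) \<and> (\<forall>A. A \<subseteq> K \<longrightarrow> A \<in> M \<or> K - A \<in> M)"

lemma compactin_by_ultra:
  assumes "K \<subseteq> topspace X"
    and R: "\<And>M. ultra M K \<Longrightarrow> \<exists>g\<in>K. \<forall>U. openin X U \<and> g \<in> U \<longrightarrow> U \<inter> K \<in> M"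
  shows "compactin X K"
proof -
  have "\<exists>\<F>. finite \<F> \<and> \<F> \<subseteq> \<U> \<and> K \<subseteq> \<Union>\<F>"
    if U: "\<forall>U\<in>\<U>. openin X U" "K \<subseteq> \<Union>\<U>" for \<U>
  proof (rule ccontr)
    assume nf: "\<not> (\<exists>\<F>. finite \<F> \<and> \<F> \<subseteq> \<U> \<and> K \<subseteq> \<Union>\<F>)"
    define fip where "fip \<A> \<longleftrightarrow> \<A> \<subseteq> Pow K \<and> (\<forall>\<G>. finite \<G> \<and> \<G> \<subseteq> \<A> \<longrightarrow> K \<inter> \<Inter>\<G> \<noteq> {})" for \<A>
    define A0 where "A0 = {K - \<Union>\<V> | \<V>. finite \<V> \<and> \<V> \<subseteq> \<U>}"
    define Z where "Z = {\<A>. A0 \<subseteq> \<A> \<and> fip \<A>}"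
    have Kne: "K \<noteq> {}" using nf by blast
    have ind: "finite \<G> \<Longrightarrow> \<G> \<subseteq> A0 \<Longrightarrow> \<exists>\<V>. finite \<V> \<and> \<V> \<subseteq> \<U> \<and> K - \<Union>\<V> \<subseteq> K \<inter> \<Inter>\<G>" for \<G>
    proof (induction \<G> rule: finite_induct)
      case empty
      show ?case by (intro exI[of _ "{}"]) auto
    next
      case (insert A \<G>)
      then obtain \<V> where V: "finite \<V>" "\<V> \<subseteq> \<U>" "K - \<Union>\<V> \<subseteq> K \<inter> \<Inter>\<G>" by blast
      from insert(4) obtain \<V>a where Va: "finite \<V>a" "\<V>a \<subseteq> \<U>" "A = K - \<Union>\<V>a"
        unfolding A0_def by blast
      show ?case using V Va by (intro exI[of _ "\<V> \<union> \<V>a"]) auto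
    qed
    have "fip A0"
      unfolding fip_def
    proof (intro conjI allI impI)
      show "A0 \<subseteq> Pow K" unfolding A0_def by blast
    next
      fix \<G> assume G: "finite \<G> \<and> \<G> \<subseteq> A0"
      then have "finite \<G>" "\<G> \<subseteq> A0" by simp_all
      from ind[OF this] obtain \<V> where V: "finite \<V>" "\<V> \<subseteq> \<U>" "K - \<Union>\<V> \<subseteq> K \<inter> \<Inter>\<G>" by blast
      have "K - \<Union>\<V> \<noteq> {}" using nf V(1,2) by blast
      then show "K \<inter> \<Inter>\<G> \<noteq> {}" using V(3) by blast
    qed
    then have A0Z: "A0 \<in> Z" unfolding Z_def by blast
    have zc: "\<forall>C\<in>chains Z. \<exists>U\<in>Z. \<forall>X\<in>C. X \<subseteq> U"
    proof
      fix C assume C: "C \<in> chains Z"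
      show "\<exists>U\<in>Z. \<forall>X\<in>C. X \<subseteq> U"
      proof (cases "C = {}")
        case True
        then show ?thesis using A0Z by blast
      next
        case False
        have CZ: "C \<subseteq> Z" using C by (simp add: chains_def)
        have ch: "subset.chain Z C" using C by (simp add: chains_alt_def)
        have "fip (\<Union>C)"
          unfolding fip_def
        proof (intro conjI allI impI)
          show "\<Union>C \<subseteq> Pow K" using CZ unfolding Z_def fip_def by blast
        next
          fix \<G> assume G: "finite \<G> \<and> \<G> \<subseteq> \<Union>C"
          then have Gf: "finite \<G>" and Gs: "\<G> \<subseteq> \<Union>C" by simp_all
          show "K \<inter> \<Inter>\<G> \<noteq> {}"
          proof (cases "\<G> = {}")
            case True then show ?thesis using Kne by simp
          next
            case False
            obtain B where B: "B \<in> C" "\<G> \<subseteq> B"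
              by (rule finite_subset_Union_chain[OF Gf Gs \<open>C \<noteq> {}\<close> ch])
            then have "B \<in> Z" using CZ by blast
            then have "fip B" unfolding Z_def by simp
            then have "\<forall>\<G>. finite \<G> \<and> \<G> \<subseteq> B \<longrightarrow> K \<inter> \<Inter>\<G> \<noteq> {}" unfolding fip_def by simp
            then show ?thesis using Gf B(2) by blast
          qed
        qed
        moreover have "A0 \<subseteq> \<Union>C" using False CZ unfolding Z_def by blast
        ultimately have "\<Union>C \<in> Z" unfolding Z_def by blast
        then show ?thesis by blast
      qed
    qed
    obtain M where M: "M \<in> Z" "\<forall>X\<in>Z. M \<subseteq> X \<longrightarrow> X = M"
      using Zorn_Lemma2[OF zc] by blast
    have fM: "fip M" and A0M: "A0 \<subseteq> M" using M(1) unfolding Z_def by blast+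
    have MK: "M \<subseteq> Pow K" using fM unfolding fip_def by blast
    have fM0: "\<forall>\<G>. finite \<G> \<and> \<G> \<subseteq> M \<longrightarrow> K \<inter> \<Inter>\<G> \<noteq> {}" using fM unfolding fip_def by simp
    have fM': "K \<inter> \<Inter>\<G> \<noteq> {}" if "finite \<G>" "\<G> \<subseteq> M" for \<G>
      using fM0 that by blast
    have add: "A \<in> M" if A: "A \<subseteq> K" "\<forall>\<G>. finite \<G> \<and> \<G> \<subseteq> M \<longrightarrow> A \<inter> \<Inter>\<G> \<noteq> {}" for A
    proof -
      have "fip (insert A M)"
        unfolding fip_def
      proof (intro conjI allI impI)
        show "insert A M \<subseteq> Pow K" using A(1) MK by blast
      next
        fix \<G> assume G: "finite \<G> \<and> \<G> \<subseteq> insert A M"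
        show "K \<inter> \<Inter>\<G> \<noteq> {}"
        proof (cases "A \<in> \<G>")
          case True
          have "finite (\<G> - {A})" "\<G> - {A} \<subseteq> M" using G by blast+
          then have "A \<inter> \<Inter>(\<G> - {A}) \<noteq> {}" using A(2)[rule_format, of "\<G> - {A}"] by simp
          moreover have "A \<inter> \<Inter>(\<G> - {A}) \<subseteq> K \<inter> \<Inter>\<G>" using A(1) True by blast
          ultimately show ?thesis by blast
        next
          case False
          then have "\<G> \<subseteq> M" using G by blast
          then show ?thesis using fM' G by blast
        qed
      qed
      then have "insert A M \<in> Z" using A0M unfolding Z_def by blast
      then have "insert A M = M" using M(2) by blast
      then show ?thesis by blast
    qed
    have uM: "ultra M K"
      unfolding ultra_def
    proof (intro conjI ballI allI impI)
      show "M \<subseteq> Pow K" by (rule MK)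
    next
      show "K \<in> M" by (rule add) (use fM' in auto)
    next
      show "{} \<notin> M"
      proof
        assume "{} \<in> M"
        then have "K \<inter> \<Inter>{{}} \<noteq> {}" using fM'[of "{{}}"] by blast
        then show False by simp
      qed
    next
      fix A B assume AB: "A \<in> M" "B \<in> M"
      show "A \<inter> B \<in> M"
      proof (rule add)
        show "A \<inter> B \<subseteq> K" using AB MK by blast
        show "\<forall>\<G>. finite \<G> \<and> \<G> \<subseteq> M \<longrightarrow> A \<inter> B \<inter> \<Inter>\<G> \<noteq> {}"
        proof (intro allI impI)
          fix \<G> assume G: "finite \<G> \<and> \<G> \<subseteq> M"
          then have "finite (insert A (insert B \<G>))" "insert A (insert B \<G>) \<subseteq> M" using AB by simp_all
          then have "K \<inter> \<Inter>(insert A (insert B \<G>)) \<noteq> {}" by (rule fM')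
          moreover have "K \<inter> \<Inter>(insert A (insert B \<G>)) \<subseteq> A \<inter> B \<inter> \<Inter>\<G>" by auto
          ultimately show "A \<inter> B \<inter> \<Inter>\<G> \<noteq> {}" by (metis subset_empty)
        qed
      qed
    next
      fix A B assume A: "A \<in> M" and B: "A \<subseteq> B \<and> B \<subseteq> K"
      show "B \<in> M"
      proof (rule add)
        show "B \<subseteq> K" using B by blast
        show "\<forall>\<G>. finite \<G> \<and> \<G> \<subseteq> M \<longrightarrow> B \<inter> \<Inter>\<G> \<noteq> {}"
        proof (intro allI impI)
          fix \<G> assume G: "finite \<G> \<and> \<G> \<subseteq> M"
          then have "finite (insert A \<G>)" "insert A \<G> \<subseteq> M" using A by simp_all
          then have "K \<inter> \<Inter>(insert A \<G>) \<noteq> {}" by (rule fM')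
          moreover have "K \<inter> \<Inter>(insert A \<G>) \<subseteq> B \<inter> \<Inter>\<G>" using B by auto
          ultimately show "B \<inter> \<Inter>\<G> \<noteq> {}" by (metis subset_empty)
        qed
      qed
    next
      fix A assume AK: "A \<subseteq> K"
      show "A \<in> M \<or> K - A \<in> M"
      proof (rule ccontr)
        assume "\<not> (A \<in> M \<or> K - A \<in> M)"
        then have n1: "A \<notin> M" and n2: "K - A \<notin> M" by blast+
        have "\<not> (\<forall>\<G>. finite \<G> \<and> \<G> \<subseteq> M \<longrightarrow> A \<inter> \<Inter>\<G> \<noteq> {})"
        proof
          assume "\<forall>\<G>. finite \<G> \<and> \<G> \<subseteq> M \<longrightarrow> A \<inter> \<Inter>\<G> \<noteq> {}"
          then have "A \<in> M" by (rule add[OF AK])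
          with n1 show False by simp
        qed
        then obtain \<G>1 where G1: "finite \<G>1" "\<G>1 \<subseteq> M" "A \<inter> \<Inter>\<G>1 = {}" by blast
        have "\<not> (\<forall>\<G>. finite \<G> \<and> \<G> \<subseteq> M \<longrightarrow> (K - A) \<inter> \<Inter>\<G> \<noteq> {})"
        proof
          assume "\<forall>\<G>. finite \<G> \<and> \<G> \<subseteq> M \<longrightarrow> (K - A) \<inter> \<Inter>\<G> \<noteq> {}"
          then have "K - A \<in> M" by (rule add[rotated]) blast
          with n2 show False by simp
        qed
        then obtain \<G>2 where G2: "finite \<G>2" "\<G>2 \<subseteq> M" "(K - A) \<inter> \<Inter>\<G>2 = {}" by blast
        have "K \<inter> \<Inter>(\<G>1 \<union> \<G>2) \<subseteq> (A \<inter> \<Inter>\<G>1) \<union> ((K - A) \<inter> \<Inter>\<G>2)" by blast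
        then have "K \<inter> \<Inter>(\<G>1 \<union> \<G>2) = {}" using G1(3) G2(3) by simp
        moreover have "K \<inter> \<Inter>(\<G>1 \<union> \<G>2) \<noteq> {}" using fM'[of "\<G>1 \<union> \<G>2"] G1(1,2) G2(1,2) by simp
        ultimately show False by blast
      qed
    qed
    then obtain g where g: "g \<in> K" "\<forall>U. openin X U \<and> g \<in> U \<longrightarrow> U \<inter> K \<in> M" using R[OF uM] by blast
    then obtain U where Ug: "U \<in> \<U>" "g \<in> U" using U(2) by blast
    then have "U \<inter> K \<in> M" using g(2) U(1) by blast
    moreover have "K - U \<in> M"
    proof -
      have "K - \<Union>{U} \<in> A0" unfolding A0_def using Ug(1) by blast
      then show ?thesis using A0M by auto
    qed
    moreover have "\<forall>A\<in>M. \<forall>B\<in>M. A \<inter> B \<in> M" "{} \<notin> M" using uM unfolding ultra_def by simp_all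
    ultimately have "U \<inter> K \<inter> (K - U) \<in> M" "{} \<notin> M" by blast+
    moreover have "U \<inter> K \<inter> (K - U) = {}" by blast
    ultimately show False by simp
  qed
  then show ?thesis unfolding compactin_def using assms(1) by blast
qed



lemma ultra_int: "ultra M K \<Longrightarrow> A \<in> M \<Longrightarrow> B \<in> M \<Longrightarrow> A \<inter> B \<in> M"
  unfolding ultra_def by blast
lemma ultra_up: "ultra M K \<Longrightarrow> A \<in> M \<Longrightarrow> A \<subseteq> B \<Longrightarrow> B \<subseteq> K \<Longrightarrow> B \<in> M"
  unfolding ultra_def by blast
lemma ultra_ne: "ultra M K \<Longrightarrow> A \<in> M \<Longrightarrow> A \<noteq> {}"
  unfolding ultra_def by blast
lemma ultra_sub: "ultra M K \<Longrightarrow> A \<in> M \<Longrightarrow> A \<subseteq> K"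
  unfolding ultra_def by blast
lemma ultra_K: "ultra M K \<Longrightarrow> K \<in> M"
  unfolding ultra_def by blast
lemma ultra_ultra: "ultra M K \<Longrightarrow> A \<subseteq> K \<Longrightarrow> A \<in> M \<or> K - A \<in> M"
  unfolding ultra_def by blast

lemma ultra_fin:
  assumes "ultra M K" "finite I" "\<And>i. i \<in> I \<Longrightarrow> A i \<in> M"
  shows "K \<inter> (\<Inter>i\<in>I. A i) \<in> M"
  using assms(2,3)
proof (induction I rule: finite_induct)
  case empty
  then show ?case using ultra_K[OF assms(1)] by simp
next
  case (insert i I)
  then have "A i \<inter> (K \<inter> (\<Inter>i\<in>I. A i)) \<in> M" using ultra_int[OF assms(1)] by blast
  moreover have "A i \<inter> (K \<inter> (\<Inter>i\<in>I. A i)) = K \<inter> (\<Inter>i\<in>insert i I. A i)" by auto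
  ultimately show ?case by simp
qed

lemma fep_K:
  fixes F :: "('a::topological_space \<Rightarrow> 'b::uniform_space set) set"
  assumes fep: "finite_extension_property F" and FC: "F \<subseteq> CMF" and V: "V \<in> entourages"
  shows "\<exists>P E. finite P \<and> E \<in> entourages \<and>
     (\<forall>h1\<in>uc_topology closure_of F. \<forall>h2\<in>uc_topology closure_of F.
        (\<forall>x\<in>P. hc E (h1 x) (h2 x)) \<longrightarrow> (\<forall>x. hc V (h1 x) (h2 x)))"
proof -
  obtain V' where V': "V' \<in> entourages" "\<forall>a b c d. (a, b) \<in> V' \<longrightarrow> (b, c) \<in> V' \<longrightarrow> (c, d) \<in> V' \<longrightarrow> (a, d) \<in> V"
    using ent_chain3[OF V] by blast
  obtain P E where PE: "finite P" "E \<in> entourages"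
     "\<forall>f\<in>F. \<forall>h\<in>F. (\<forall>x\<in>P. hc E (f x) (h x)) \<longrightarrow> (\<forall>x. hc V' (f x) (h x))"
    using fep_D[OF fep FC V'(1)] by blast
  obtain E' where E': "E' \<in> entourages" "\<forall>a b c d. (a, b) \<in> E' \<longrightarrow> (b, c) \<in> E' \<longrightarrow> (c, d) \<in> E' \<longrightarrow> (a, d) \<in> E"
    using ent_chain3[OF PE(2)] by blast
  define D where "D = E' \<inter> V'"
  have D: "D \<in> entourages" unfolding D_def using E'(1) V'(1) by (rule ent_Int)
  have key: "\<forall>x. hc V (h1 x) (h2 x)"
    if h: "h1 \<in> uc_topology closure_of F" "h2 \<in> uc_topology closure_of F" "\<forall>x\<in>P. hc D (h1 x) (h2 x)" for h1 h2
  proof -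
    obtain f1 where f1: "f1 \<in> F" "\<forall>x. hc D (h1 x) (f1 x)" using uc_closure[OF h(1) D] by blast
    obtain f2 where f2: "f2 \<in> F" "\<forall>x. hc D (h2 x) (f2 x)" using uc_closure[OF h(2) D] by blast
    have "\<forall>x\<in>P. hc E (f1 x) (f2 x)"
    proof
      fix x assume x: "x \<in> P"
      have a: "hc D (f1 x) (h1 x)" using hc_sym[OF D] f1(2) by blast
      have b: "hc D (h1 x) (h2 x)" using h(3) x by blast
      have c: "hc D (h2 x) (f2 x)" using f2(2) by blast
      define R where "R = {(a, c). \<exists>b. (a, b) \<in> E' \<and> (b, c) \<in> E'}"
      have ab: "hc R (f1 x) (h2 x)" using hc_trans[OF a b, of R] unfolding R_def D_def by blast
      show "hc E (f1 x) (f2 x)" using hc_trans[OF ab c, of E] E'(2) unfolding R_def D_def by blast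
    qed
    then have ff: "\<forall>x. hc V' (f1 x) (f2 x)" using PE(3) f1(1) f2(1) by blast
    show ?thesis
    proof
      fix x
      have a: "hc D (h1 x) (f1 x)" using f1(2) by blast
      have c: "hc D (f2 x) (h2 x)" using hc_sym[OF D] f2(2) by blast
      define R where "R = {(a, c). \<exists>b. (a, b) \<in> V' \<and> (b, c) \<in> V'}"
      have ab: "hc R (h1 x) (f2 x)" using hc_trans[OF a ff[rule_format, of x], of R] unfolding R_def D_def by blast
      show "hc V (h1 x) (h2 x)" using hc_trans[OF ab c, of V] V'(2) unfolding R_def D_def by blast
    qed
  qed
  show ?thesis using key PE(1) D by blast
qed


lemma ucK_CMF: "uc_topology closure_of F \<subseteq> CMF"
  using closure_of_subset_topspace[of uc_topology F] unfolding topspace_uc .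

context
  fixes F :: "('a::topological_space \<Rightarrow> 'b::uniform_space set) set"
    and M :: "('a \<Rightarrow> 'b set) set set" and K :: "('a \<Rightarrow> 'b set) set"
  assumes FC: "F \<subseteq> CMF" and prc: "pointwise_rel_compact F" and fep: "finite_extension_property F"
    and KD: "K = uc_topology closure_of F" and uM: "ultra M K"
begin

definition Cx :: "'a \<Rightarrow> 'b set" where "Cx x = closure (\<Union>f\<in>F. f x)"

lemma Cx_compact: "compact (Cx x)"
  using prc unfolding pointwise_rel_compact_def Cx_def by blast

lemma KC: "K \<subseteq> CMF" unfolding KD by (rule ucK_CMF)

lemma hK: "h \<in> K \<Longrightarrow> h x \<subseteq> Cx x"
proof
  fix y assume h: "h \<in> K" and y: "y \<in> h x"
  show "y \<in> Cx x" unfolding Cx_def closure_ent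
  proof
    fix V :: "('b \<times> 'b) set" assume V: "V \<in> entourages"
    have h': "h \<in> uc_topology closure_of F" using h KD by simp
    obtain f where f: "f \<in> F" "\<forall>x. hc V (h x) (f x)" using uc_closure[OF h' V] by blast
    then obtain z where "z \<in> f x" "(y, z) \<in> V" using y unfolding hc_def by blast
    then show "\<exists>z\<in>\<Union>f\<in>F. f x. (y, z) \<in> V" using f(1) by blast
  qed
qed

definition gl :: "'a \<Rightarrow> 'b set" where
  "gl x = {y. \<forall>V\<in>entourages. {h\<in>K. h x \<inter> V `` {y} \<noteq> {}} \<in> M}"

lemma avoid:
  assumes "compact E" "E \<inter> gl x = {}"
  shows "{h\<in>K. h x \<inter> E = {}} \<in> M"
proof -
  have ex: "\<forall>z\<in>E. \<exists>V. V \<in> entourages \<and> {h\<in>K. h x \<inter> V `` {z} = {}} \<in> M"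
  proof
    fix z assume z: "z \<in> E"
    have "z \<notin> gl x" using assms(2) z by blast
    then obtain V where V: "V \<in> entourages" "{h\<in>K. h x \<inter> V `` {z} \<noteq> {}} \<notin> M" unfolding gl_def by blast
    have eq: "K - {h\<in>K. h x \<inter> V `` {z} \<noteq> {}} = {h\<in>K. h x \<inter> V `` {z} = {}}" by blast
    have "{h\<in>K. h x \<inter> V `` {z} \<noteq> {}} \<in> M \<or> K - {h\<in>K. h x \<inter> V `` {z} \<noteq> {}} \<in> M"
      by (rule ultra_ultra[OF uM]) blast
    then show "\<exists>V. V \<in> entourages \<and> {h\<in>K. h x \<inter> V `` {z} = {}} \<in> M" using V eq by auto
  qed
  obtain Vf where Vf0: "\<forall>z\<in>E. Vf z \<in> entourages \<and> {h\<in>K. h x \<inter> Vf z `` {z} = {}} \<in> M"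
    using bchoice[OF ex] by blast
  then have Vf: "\<And>z. z \<in> E \<Longrightarrow> Vf z \<in> entourages \<and> {h\<in>K. h x \<inter> Vf z `` {z} = {}} \<in> M" by blast
  have ex2: "\<forall>z\<in>E. \<exists>O'. open O' \<and> z \<in> O' \<and> O' \<subseteq> Vf z `` {z}" using ent_nhd Vf by blast
  obtain Of where Of0: "\<forall>z\<in>E. open (Of z) \<and> z \<in> Of z \<and> Of z \<subseteq> Vf z `` {z}"
    using bchoice[OF ex2] by blast
  then have Of: "\<And>z. z \<in> E \<Longrightarrow> open (Of z) \<and> z \<in> Of z \<and> Of z \<subseteq> Vf z `` {z}" by blast
  obtain Z where Z: "Z \<subseteq> E" "finite Z" "E \<subseteq> (\<Union>z\<in>Z. Of z)"
    using compactE_image[OF assms(1), of E Of] Of by blast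
  have A: "K \<inter> (\<Inter>z\<in>Z. {h\<in>K. h x \<inter> Vf z `` {z} = {}}) \<in> M"
    using ultra_fin[OF uM Z(2), of "\<lambda>z. {h\<in>K. h x \<inter> Vf z `` {z} = {}}"] Vf Z(1) by blast
  have "K \<inter> (\<Inter>z\<in>Z. {h\<in>K. h x \<inter> Vf z `` {z} = {}}) \<subseteq> {h\<in>K. h x \<inter> E = {}}"
  proof
    fix h assume h: "h \<in> K \<inter> (\<Inter>z\<in>Z. {h\<in>K. h x \<inter> Vf z `` {z} = {}})"
    have "h x \<inter> E = {}"
    proof (rule ccontr)
      assume "h x \<inter> E \<noteq> {}"
      then obtain y where y: "y \<in> h x" "y \<in> E" by blast
      then obtain z where z: "z \<in> Z" "y \<in> Of z" using Z(3) by blast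
      then have "y \<in> Vf z `` {z}" using Of Z(1) by blast
      moreover have "h x \<inter> Vf z `` {z} = {}" using h z(1) by blast
      ultimately show False using y(1) by blast
    qed
    then show "h \<in> {h\<in>K. h x \<inter> E = {}}" using h by blast
  qed
  then show ?thesis using ultra_up[OF uM A] by blast
qed

lemma gl_ne: "gl x \<noteq> {}"
proof
  assume "gl x = {}"
  then have "{h\<in>K. h x \<inter> Cx x = {}} \<in> M" using avoid[OF Cx_compact] by blast
  moreover have "{h\<in>K. h x \<inter> Cx x = {}} = {}"
  proof -
    have "h x \<inter> Cx x \<noteq> {}" if "h \<in> K" for h
      using hK[OF that, of x] CMF_ne[of h x] KC that by blast
    then show ?thesis by blast
  qed
  ultimately show False using ultra_ne[OF uM] by blast
qed

lemma gl_sub: "gl x \<subseteq> Cx x"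
proof
  fix y assume y: "y \<in> gl x"
  have "y \<in> closure (Cx x)" unfolding closure_ent
  proof
    fix V :: "('b \<times> 'b) set" assume V: "V \<in> entourages"
    then have "{h\<in>K. h x \<inter> V `` {y} \<noteq> {}} \<in> M" using y unfolding gl_def by blast
    then obtain h where "h \<in> K" "h x \<inter> V `` {y} \<noteq> {}" using ultra_ne[OF uM] by blast
    then show "\<exists>z\<in>Cx x. (y, z) \<in> V" using hK by blast
  qed
  then show "y \<in> Cx x" unfolding Cx_def by simp
qed

lemma gl_closed: "closed (gl x)"
proof -
  have "closure (gl x) \<subseteq> gl x"
  proof
    fix y assume y: "y \<in> closure (gl x)"
    have "{h\<in>K. h x \<inter> V `` {y} \<noteq> {}} \<in> M" if V: "V \<in> entourages" for V
    proof -
      obtain W where W: "W \<in> entourages" "\<forall>a b c. (a, b) \<in> W \<longrightarrow> (b, c) \<in> W \<longrightarrow> (a, c) \<in> V"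
        using ent_half[OF V] by blast
      obtain y' where y': "y' \<in> gl x" "(y, y') \<in> W" using y W(1) unfolding closure_ent by blast
      have A: "{h\<in>K. h x \<inter> W `` {y'} \<noteq> {}} \<in> M" using y' W(1) unfolding gl_def by blast
      have "{h\<in>K. h x \<inter> W `` {y'} \<noteq> {}} \<subseteq> {h\<in>K. h x \<inter> V `` {y} \<noteq> {}}"
        using W(2) y'(2) by blast
      then show ?thesis using ultra_up[OF uM A] by blast
    qed
    then show "y \<in> gl x" unfolding gl_def by blast
  qed
  then show ?thesis using closure_subset_eq by blast
qed

lemma gl_compact: "compact (gl x)"
proof -
  have "gl x = Cx x \<inter> gl x" using gl_sub by blast
  then show ?thesis using compact_Int_closed[OF Cx_compact gl_closed] by metis
qed


lemma ptw:
  assumes V: "V \<in> entourages"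
  shows "{h\<in>K. hc V (h x) (gl x)} \<in> M"
proof -
  obtain W where W: "W \<in> entourages" "\<forall>a b c. (a, b) \<in> W \<longrightarrow> (b, c) \<in> W \<longrightarrow> (a, c) \<in> V"
    using ent_half[OF V] by blast
  have WV: "W \<subseteq> V" using ent_half_sub[OF V W(2) W(1)] .
  have ex: "\<forall>y. \<exists>O'. open O' \<and> y \<in> O' \<and> O' \<subseteq> W `` {y}" using ent_nhd[OF W(1)] by blast
  obtain Of where Of0: "\<forall>y. open (Of y) \<and> y \<in> Of y \<and> Of y \<subseteq> W `` {y}" using choice[OF ex] by blast
  then have Of: "\<And>y. open (Of y) \<and> y \<in> Of y \<and> Of y \<subseteq> W `` {y}" by blast
  define Og where "Og = \<Union>(Of ` gl x)"
  have oOg: "open Og" unfolding Og_def using Of by blast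
  have gOg: "gl x \<subseteq> Og" unfolding Og_def using Of by blast
  define E where "E = Cx x - Og"
  have cE: "compact E" unfolding E_def using compact_diff[OF Cx_compact oOg] .
  have "E \<inter> gl x = {}" unfolding E_def using gOg by blast
  then have A1: "{h\<in>K. h x \<inter> E = {}} \<in> M" using avoid[OF cE] by blast
  obtain Y where Y: "Y \<subseteq> gl x" "finite Y" "gl x \<subseteq> (\<Union>y\<in>Y. Of y)"
    using compactE_image[OF gl_compact, of "gl x" Of] Of by blast
  have A2: "K \<inter> (\<Inter>y\<in>Y. {h\<in>K. h x \<inter> W `` {y} \<noteq> {}}) \<in> M"
    using ultra_fin[OF uM Y(2), of "\<lambda>y. {h\<in>K. h x \<inter> W `` {y} \<noteq> {}}"] Y(1) W(1) unfolding gl_def by blast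
  have "{h\<in>K. h x \<inter> E = {}} \<inter> (K \<inter> (\<Inter>y\<in>Y. {h\<in>K. h x \<inter> W `` {y} \<noteq> {}})) \<subseteq> {h\<in>K. hc V (h x) (gl x)}"
  proof
    fix h assume h: "h \<in> {h\<in>K. h x \<inter> E = {}} \<inter> (K \<inter> (\<Inter>y\<in>Y. {h\<in>K. h x \<inter> W `` {y} \<noteq> {}}))"
    have hK': "h \<in> K" using h by blast
    have 1: "\<exists>b\<in>gl x. (a, b) \<in> V" if a: "a \<in> h x" for a
    proof -
      have "a \<in> Cx x" using hK[OF hK'] a by blast
      moreover have "a \<notin> E" using h a by blast
      ultimately have "a \<in> Og" unfolding E_def by blast
      then obtain y where y: "y \<in> gl x" "a \<in> Of y" unfolding Og_def by blast
      then have "(y, a) \<in> W" using Of by blast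
      then have "(a, y) \<in> W" using ent_sym[OF W(1)] by blast
      then show ?thesis using y(1) WV by blast
    qed
    have 2: "\<exists>a\<in>h x. (a, b) \<in> V" if b: "b \<in> gl x" for b
    proof -
      obtain y where y: "y \<in> Y" "b \<in> Of y" using Y(3) b by blast
      then have yb: "(y, b) \<in> W" using Of by blast
      have "h x \<inter> W `` {y} \<noteq> {}" using h y(1) by blast
      then obtain a where a: "a \<in> h x" "(y, a) \<in> W" by blast
      have "(a, y) \<in> W" using ent_sym[OF W(1) a(2)] .
      then have "(a, b) \<in> V" using W(2) yb by blast
      then show ?thesis using a(1) by blast
    qed
    show "h \<in> {h\<in>K. hc V (h x) (gl x)}" unfolding hc_def using 1 2 hK' by blast
  qed
  moreover have "{h\<in>K. h x \<inter> E = {}} \<inter> (K \<inter> (\<Inter>y\<in>Y. {h\<in>K. h x \<inter> W `` {y} \<noteq> {}})) \<in> M"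
    using ultra_int[OF uM A1 A2] .
  ultimately show ?thesis using ultra_up[OF uM] by blast
qed

lemma unif:
  assumes V: "V \<in> entourages"
  shows "{h\<in>K. \<forall>x. hc V (h x) (gl x)} \<in> M"
proof -
  obtain V1 where V1: "V1 \<in> entourages" "\<forall>a b c. (a, b) \<in> V1 \<longrightarrow> (b, c) \<in> V1 \<longrightarrow> (a, c) \<in> V"
    using ent_half[OF V] by blast
  obtain P E where PE: "finite P" "E \<in> entourages"
     "\<forall>h1\<in>K. \<forall>h2\<in>K. (\<forall>x\<in>P. hc E (h1 x) (h2 x)) \<longrightarrow> (\<forall>x. hc V1 (h1 x) (h2 x))"
    using fep_K[OF fep FC V1(1)] unfolding KD by blast
  obtain E1 where E1: "E1 \<in> entourages" "\<forall>a b c. (a, b) \<in> E1 \<longrightarrow> (b, c) \<in> E1 \<longrightarrow> (a, c) \<in> E"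
    using ent_half[OF PE(2)] by blast
  have A: "K \<inter> (\<Inter>p\<in>P. {h\<in>K. hc E1 (h p) (gl p)}) \<in> M"
    using ultra_fin[OF uM PE(1), of "\<lambda>p. {h\<in>K. hc E1 (h p) (gl p)}"] ptw[OF E1(1)] by blast
  have "K \<inter> (\<Inter>p\<in>P. {h\<in>K. hc E1 (h p) (gl p)}) \<subseteq> {h\<in>K. \<forall>x. hc V (h x) (gl x)}"
  proof
    fix h1 assume h1: "h1 \<in> K \<inter> (\<Inter>p\<in>P. {h\<in>K. hc E1 (h p) (gl p)})"
    have "hc V (h1 x) (gl x)" for x
    proof -
      have "(K \<inter> (\<Inter>p\<in>P. {h\<in>K. hc E1 (h p) (gl p)})) \<inter> {h\<in>K. hc V1 (h x) (gl x)} \<in> M"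
        using ultra_int[OF uM A ptw[OF V1(1)]] .
      then obtain h2 where h2: "h2 \<in> (K \<inter> (\<Inter>p\<in>P. {h\<in>K. hc E1 (h p) (gl p)})) \<inter> {h\<in>K. hc V1 (h x) (gl x)}"
        using ultra_ne[OF uM] by blast
      have "\<forall>p\<in>P. hc E (h1 p) (h2 p)"
      proof
        fix p assume p: "p \<in> P"
        have a: "hc E1 (h1 p) (gl p)" using h1 p by blast
        have b: "hc E1 (gl p) (h2 p)" using h2 p hc_sym[OF E1(1)] by blast
        show "hc E (h1 p) (h2 p)" using hc_trans[OF a b] E1(2) by blast
      qed
      then have x1: "hc V1 (h1 x) (h2 x)" using PE(3) h1 h2 by blast
      have x2: "hc V1 (h2 x) (gl x)" using h2 by blast
      show ?thesis by (rule hc_trans[OF x1 x2 V1(2)])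
    qed
    then show "h1 \<in> {h\<in>K. \<forall>x. hc V (h x) (gl x)}" using h1 by blast
  qed
  then show ?thesis using ultra_up[OF uM A] by blast
qed

lemma approx:
  assumes "V \<in> entourages" shows "\<exists>h\<in>K. \<forall>x. hc V (h x) (gl x)"
proof -
  have "{h\<in>K. \<forall>x. hc V (h x) (gl x)} \<noteq> {}" using ultra_ne[OF uM unif[OF assms]] .
  then show ?thesis by blast
qed

lemma gl_usc: "usc_mf gl"
  unfolding usc_mf_def
proof (intro allI impI)
  fix x and W0 :: "'b set" assume W0: "open W0 \<and> gl x \<subseteq> W0"
  obtain E where E: "E \<in> entourages" "E `` gl x \<subseteq> W0"
    using compact_ent[OF gl_compact] W0 by blast
  obtain E' where E': "E' \<in> entourages" "\<forall>a b c d. (a, b) \<in> E' \<longrightarrow> (b, c) \<in> E' \<longrightarrow> (c, d) \<in> E' \<longrightarrow> (a, d) \<in> E"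
    using ent_chain3[OF E(1)] by blast
  obtain h where h: "h \<in> K" "\<forall>x. hc E' (h x) (gl x)" using approx[OF E'(1)] by blast
  have "h \<in> CMF" using h(1) KC by blast
  then have husc: "usc_mf h" unfolding CMF_def by simp
  have ex: "\<forall>z. \<exists>O'. open O' \<and> z \<in> O' \<and> O' \<subseteq> E' `` {z}" using ent_nhd[OF E'(1)] by blast
  obtain Of where Of0: "\<forall>z. open (Of z) \<and> z \<in> Of z \<and> Of z \<subseteq> E' `` {z}" using choice[OF ex] by blast
  then have Of: "\<And>z. open (Of z) \<and> z \<in> Of z \<and> Of z \<subseteq> E' `` {z}" by blast
  define Oh where "Oh = \<Union>(Of ` h x)"
  have "open Oh" "h x \<subseteq> Oh" unfolding Oh_def using Of by blast+
  then have "\<exists>U. open U \<and> x \<in> U \<and> \<Union>(h ` U) \<subseteq> Oh"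
    using husc unfolding usc_mf_def by (elim allE[of _ x] allE[of _ Oh]) blast
  then obtain U where U: "open U" "x \<in> U" "\<Union>(h ` U) \<subseteq> Oh" by blast
  have "\<Union>(gl ` U) \<subseteq> W0"
  proof
    fix w assume "w \<in> \<Union>(gl ` U)"
    then obtain u where u: "u \<in> U" "w \<in> gl u" by blast
    obtain a where a: "a \<in> h u" "(a, w) \<in> E'" using h(2) u(2) unfolding hc_def by blast
    have "a \<in> Oh" using U(3) u(1) a(1) by blast
    then obtain z where z: "z \<in> h x" "a \<in> Of z" unfolding Oh_def by blast
    then have za: "(z, a) \<in> E'" using Of by blast
    obtain b where b: "b \<in> gl x" "(z, b) \<in> E'" using h(2) z(1) unfolding hc_def by blast
    have "(b, z) \<in> E'" using ent_sym[OF E'(1) b(2)] .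
    then have "(b, w) \<in> E" using E'(2) za a(2) by blast
    then show "w \<in> W0" using E(2) b(1) by blast
  qed
  then show "\<exists>U. open U \<and> x \<in> U \<and> \<Union>(gl ` U) \<subseteq> W0" using U(1,2) by blast
qed

lemma gl_lsc: "lsc_mf gl"
  unfolding lsc_mf_def
proof (intro allI impI)
  fix x and W0 :: "'b set" assume W0: "open W0 \<and> gl x \<inter> W0 \<noteq> {}"
  then obtain y where y: "y \<in> gl x" "y \<in> W0" by blast
  obtain E where E: "E \<in> entourages" "E `` {y} \<subseteq> W0"
    using open_ent[of W0 y] W0 y(2) by blast
  obtain E' where E': "E' \<in> entourages" "\<forall>a b c d. (a, b) \<in> E' \<longrightarrow> (b, c) \<in> E' \<longrightarrow> (c, d) \<in> E' \<longrightarrow> (a, d) \<in> E"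
    using ent_chain3[OF E(1)] by blast
  obtain h where h: "h \<in> K" "\<forall>x. hc E' (h x) (gl x)" using approx[OF E'(1)] by blast
  have "h \<in> CMF" using h(1) KC by blast
  then have hlsc: "lsc_mf h" unfolding CMF_def by simp
  obtain z where z: "z \<in> h x" "(z, y) \<in> E'" using h(2) y(1) unfolding hc_def by blast
  obtain O' where O': "open O'" "z \<in> O'" "O' \<subseteq> E' `` {z}" using ent_nhd[OF E'(1)] by blast
  have "h x \<inter> O' \<noteq> {}" using z(1) O'(2) by blast
  then have "\<exists>U. open U \<and> x \<in> U \<and> (\<forall>u\<in>U. h u \<inter> O' \<noteq> {})"
    using hlsc O'(1) unfolding lsc_mf_def by (elim allE[of _ x] allE[of _ O']) blast
  then obtain U where U: "open U" "x \<in> U" "\<forall>u\<in>U. h u \<inter> O' \<noteq> {}" by blast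
  have "\<forall>u\<in>U. gl u \<inter> W0 \<noteq> {}"
  proof
    fix u assume u: "u \<in> U"
    then obtain w where w: "w \<in> h u" "w \<in> O'" using U(3) by blast
    then have zw: "(z, w) \<in> E'" using O'(3) by blast
    obtain v where v: "v \<in> gl u" "(w, v) \<in> E'" using h(2) w(1) unfolding hc_def by blast
    have "(y, z) \<in> E'" using ent_sym[OF E'(1) z(2)] .
    then have "(y, v) \<in> E" using E'(2) zw v(2) by blast
    then show "gl u \<inter> W0 \<noteq> {}" using E(2) v(1) by blast
  qed
  then show "\<exists>U. open U \<and> x \<in> U \<and> (\<forall>u\<in>U. gl u \<inter> W0 \<noteq> {})" using U(1,2) by blast
qed

lemma gl_CMF: "gl \<in> CMF"
  unfolding CMF_def by (simp add: gl_ne gl_compact gl_usc gl_lsc)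

lemma gl_K: "gl \<in> K"
proof -
  have "\<exists>f. f \<in> F \<and> f \<in> T" if T: "gl \<in> T" "openin uc_topology T" for T
  proof -
    obtain V where V: "V \<in> entourages" "\<forall>k\<in>CMF. (\<forall>x. hc V (gl x) (k x)) \<longrightarrow> k \<in> T"
      using uc_open_ball[OF T(2,1)] by blast
    obtain V1 where V1: "V1 \<in> entourages" "\<forall>a b c. (a, b) \<in> V1 \<longrightarrow> (b, c) \<in> V1 \<longrightarrow> (a, c) \<in> V"
      using ent_half[OF V(1)] by blast
    obtain h where h: "h \<in> K" "\<forall>x. hc V1 (h x) (gl x)" using approx[OF V1(1)] by blast
    have h': "h \<in> uc_topology closure_of F" using h(1) KD by simp
    obtain f where f: "f \<in> F" "\<forall>x. hc V1 (h x) (f x)" using uc_closure[OF h' V1(1)] by blast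
    have "hc V (gl x) (f x)" for x
    proof -
      have "hc V1 (gl x) (h x)" using hc_sym[OF V1(1)] h(2) by blast
      then show ?thesis by (rule hc_trans[OF _ f(2)[rule_format, of x] V1(2)])
    qed
    then have "f \<in> T" using V(2) f(1) FC by blast
    then show ?thesis using f(1) by blast
  qed
  then have "gl \<in> topspace uc_topology \<and> (\<forall>T. gl \<in> T \<and> openin uc_topology T \<longrightarrow> (\<exists>y. y \<in> F \<and> y \<in> T))"
    unfolding topspace_uc using gl_CMF by blast
  then show ?thesis unfolding KD in_closure_of .
qed

lemma ultra_lim: "\<exists>g\<in>K. \<forall>U. openin uc_topology U \<and> g \<in> U \<longrightarrow> U \<inter> K \<in> M"
proof (intro bexI[OF _ gl_K] allI impI)
  fix U assume U: "openin uc_topology U \<and> gl \<in> U"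
  obtain V where V: "V \<in> entourages" "\<forall>k\<in>CMF. (\<forall>x. hc V (gl x) (k x)) \<longrightarrow> k \<in> U"
    using uc_open_ball[of U gl] U by blast
  have "{h\<in>K. \<forall>x. hc V (h x) (gl x)} \<subseteq> U \<inter> K"
  proof
    fix h assume h: "h \<in> {h\<in>K. \<forall>x. hc V (h x) (gl x)}"
    then have "\<forall>x. hc V (gl x) (h x)" using hc_sym[OF V(1)] by blast
    moreover have "h \<in> CMF" using h KC by blast
    ultimately have "h \<in> U" using V(2) by blast
    then show "h \<in> U \<inter> K" using h by blast
  qed
  then show "U \<inter> K \<in> M" using ultra_up[OF uM unif[OF V(1)]] by blast
qed

end

lemma fep_imp_rc:
  fixes F :: "('a::topological_space \<Rightarrow> 'b::uniform_space set) set"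
  assumes FC: "F \<subseteq> CMF" and prc: "pointwise_rel_compact F" and fep: "finite_extension_property F"
  shows "rel_uc_compact F"
  unfolding rel_uc_compact_def
proof (rule compactin_by_ultra)
  show "uc_topology closure_of F \<subseteq> topspace uc_topology" by (rule closure_of_subset_topspace)
next
  fix M assume "ultra M (uc_topology closure_of F)"
  then show "\<exists>g\<in>uc_topology closure_of F. \<forall>U. openin uc_topology U \<and> g \<in> U \<longrightarrow> U \<inter> (uc_topology closure_of F) \<in> M"
    by (rule ultra_lim[OF FC prc fep refl])
qed



theorem corollary3p3:
  fixes F :: "('a::topological_space \<Rightarrow> 'b::{uniform_space, t2_space} set) set"
  assumes "locally_compact_space (euclidean :: 'a topology)"
    and "F \<subseteq> CMF"
    and "pointwise_rel_compact F"
    and "equicontinuous_mf F"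
  shows "(rel_uc_compact F \<longleftrightarrow> finite_extension_property F)
       \<and> (finite_extension_property F \<longleftrightarrow> compact_extension_property F)"
proof -
  have 1: "rel_uc_compact F \<Longrightarrow> finite_extension_property F" using rc_imp_fep[OF _ assms(2)] .
  have 2: "finite_extension_property F \<Longrightarrow> rel_uc_compact F" using fep_imp_rc[OF assms(2,3)] .
  have 3: "finite_extension_property F \<Longrightarrow> compact_extension_property F" using fep_imp_cep[OF _ assms(2)] .
  have 4: "compact_extension_property F \<Longrightarrow> finite_extension_property F" using cep_imp_fep[OF _ assms(2,4)] .
  show ?thesis using 1 2 3 4 by blast
qed

end
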